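(* Let $\phi:\mathcal M_1\to\mathcal M_2$ be a homomorphism of local Moufang sets, with $\mathcal M_1=(X,(U_x))$, and let $\theta_x:U_x\to V_{x\phi}$ ($x\in X$) be the induced group homomorphisms. The following are equivalent: (i) $\phi$ is injective; (ii) $\theta_x$ is injective for all $x\in X$; (iii) $\theta_x$ is injective for some $x\in X$.
   Context: Group actions are right actions; maps are composed left to right, so $u\phi$ means first $u$ then $\phi$. For $(X,\sim)$, $\overline x$ is the class of $x$, $\overline X$ the set of classes, $\mathrm{Sym}(X,\sim)$ the bijections $g$ with $x\sim y\iff xg\sim yg$, $\overline U$ the induced group on $\overline X$. A local Moufang set is $(X,\sim)$ with $|\overline X|>2$ and subgroups $U_x\le\mathrm{Sym}(X,\sim)$ ($x\in X$) with: (LM0) $x\sim y\Rightarrow\overline{U_x}=\overline{U_y}$; (LM1) $U_x$ fixes $x$ and is sharply transitive on $X\setminus\overline x$; (LM1') $\overline{U_x}$ fixes $\overline x$ and is sharply transitive on $\overline X\setminus\{\overline x\}$; (LM2) $U_x^g=U_{xg}$ for all $x$ and all $g\in\langle U_y\rangle$, where $g^h=h^{-1}gh$. A homomorphism $\mathcal M_1=(X,(U_x))\to\mathcal M_2=(Y,(V_y))$ is a map $\phi:X\to Y$ such that $x\sim x'\iff x\phi\sim x'\phi$ for all $x,x'\in X$, and $U_x\phi\subseteq\phi V_{x\phi}$ for all $x$. For each $x\in X$ the induced map $\theta_x:U_x\to V_{x\phi}$ is the unique map with $u\phi=\phi\,\theta_x(u)$ for all $u\in U_x$ (it exists and is a group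 homomorphism). *)

theory Defs
  imports "HOL-Algebra.Generated_Groups"
begin

text \<open>Conventions: group elements act on the right, so the image of x under g is g x,
and the product g h (first g, then h) is the function h \<circ> g.  The equivalence relation
~ is given as a relation E with equiv X E; the class of x is E `` {x} and the set of
classes is X // E.\<close>

definition sym_set :: "'a set \<Rightarrow> 'a rel \<Rightarrow> ('a \<Rightarrow> 'a) set" where
  "sym_set X E = {g. bij_betw g X X \<and> (\<forall>x. x \<notin> X \<longrightarrow> g x = x) \<and>
      (\<forall>x\<in>X. \<forall>y\<in>X. (x, y) \<in> E \<longleftrightarrow> (g x, g y) \<in> E)}"

definition sym_group :: "'a set \<Rightarrow> 'a rel \<Rightarrow> ('a \<Rightarrow> 'a) monoid" where
  "sym_group X E = \<lparr>carrier = sym_set X E, mult = (\<lambda>g h. h \<circ> g), one = id\<rparr>"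

definition induced :: "'a set \<Rightarrow> 'a rel \<Rightarrow> ('a \<Rightarrow> 'a) \<Rightarrow> 'a set \<Rightarrow> 'a set" where
  "induced X E g = restrict (\<lambda>C. g ` C) (X // E)"

definition induced_group :: "'a set \<Rightarrow> 'a rel \<Rightarrow> ('a \<Rightarrow> 'a) set \<Rightarrow> ('a set \<Rightarrow> 'a set) set" where
  "induced_group X E G = induced X E ` G"

definition local_moufang_set :: "'a set \<Rightarrow> 'a rel \<Rightarrow> ('a \<Rightarrow> ('a \<Rightarrow> 'a) set) \<Rightarrow> bool" where
  "local_moufang_set X E U \<longleftrightarrow>
     equiv X E \<and>
     (\<exists>A\<in>X // E. \<exists>B\<in>X // E. \<exists>C\<in>X // E. A \<noteq> B \<and> A \<noteq> C \<and> B \<noteq> C) \<and>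
     (\<forall>x\<in>X. subgroup (U x) (sym_group X E)) \<and>
     \<comment> \<open>LM0\<close>
     (\<forall>x\<in>X. \<forall>y\<in>X. (x, y) \<in> E \<longrightarrow> induced_group X E (U x) = induced_group X E (U y)) \<and>
     \<comment> \<open>LM1\<close>
     (\<forall>x\<in>X. (\<forall>g\<in>U x. g x = x) \<and>
        (\<forall>y\<in>X - E `` {x}. \<forall>z\<in>X - E `` {x}. \<exists>!g. g \<in> U x \<and> g y = z)) \<and>
     \<comment> \<open>LM1'\<close>
     (\<forall>x\<in>X. (\<forall>h\<in>induced_group X E (U x). h (E `` {x}) = E `` {x}) \<and>
        (\<forall>C\<in>(X // E) - {E `` {x}}. \<forall>D\<in>(X // E) - {E `` {x}}.
            \<exists>!h. h \<in> induced_group X E (U x) \<and> h C = D)) \<and>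
     \<comment> \<open>LM2: U_x^g = U_{xg} for g in the group generated by all U_y\<close>
     (\<forall>x\<in>X. \<forall>g\<in>generate (sym_group X E) (\<Union>y\<in>X. U y).
        (\<lambda>u. inv\<^bsub>sym_group X E\<^esub> g \<otimes>\<^bsub>sym_group X E\<^esub> u \<otimes>\<^bsub>sym_group X E\<^esub> g) ` U x = U (g x))"

definition lms_hom :: "'a set \<Rightarrow> 'a rel \<Rightarrow> ('a \<Rightarrow> ('a \<Rightarrow> 'a) set) \<Rightarrow>
    'b set \<Rightarrow> 'b rel \<Rightarrow> ('b \<Rightarrow> ('b \<Rightarrow> 'b) set) \<Rightarrow> ('a \<Rightarrow> 'b) \<Rightarrow> bool" where
  "lms_hom X E U Y F V \<phi> \<longleftrightarrow>
     (\<forall>x\<in>X. \<phi> x \<in> Y) \<and>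
     (\<forall>x\<in>X. \<forall>x'\<in>X. (x, x') \<in> E \<longleftrightarrow> (\<phi> x, \<phi> x') \<in> F) \<and>
     (\<forall>x\<in>X. \<forall>u\<in>U x. \<exists>v\<in>V (\<phi> x). \<forall>z\<in>X. \<phi> (u z) = v (\<phi> z))"

definition induced_theta :: "'a set \<Rightarrow> ('b \<Rightarrow> ('b \<Rightarrow> 'b) set) \<Rightarrow> ('a \<Rightarrow> 'b) \<Rightarrow> 'a \<Rightarrow>
    ('a \<Rightarrow> 'a) \<Rightarrow> ('b \<Rightarrow> 'b)" where
  "induced_theta X V \<phi> x u = (THE v. v \<in> V (\<phi> x) \<and> (\<forall>z\<in>X. \<phi> (u z) = v (\<phi> z)))"

end

theory Submission
  imports Defs
begin

lemma lm_equiv: "local_moufang_set X E U \<Longrightarrow> equiv X E"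
  unfolding local_moufang_set_def by (elim conjE) assumption

lemma lm_three: "local_moufang_set X E U \<Longrightarrow>
   \<exists>A\<in>X // E. \<exists>B\<in>X // E. \<exists>C\<in>X // E. A \<noteq> B \<and> A \<noteq> C \<and> B \<noteq> C"
  unfolding local_moufang_set_def by (elim conjE) assumption

lemma lm_sub: "local_moufang_set X E U \<Longrightarrow> (\<forall>x\<in>X. subgroup (U x) (sym_group X E))"
  unfolding local_moufang_set_def by (elim conjE) assumption

lemma lm1: "local_moufang_set X E U \<Longrightarrow> (\<forall>x\<in>X. (\<forall>g\<in>U x. g x = x) \<and>
        (\<forall>y\<in>X - E `` {x}. \<forall>z\<in>X - E `` {x}. \<exists>!g. g \<in> U x \<and> g y = z))"
  unfolding local_moufang_set_def by (elim conjE) assumption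

lemma lm_trans: "local_moufang_set X E U \<Longrightarrow> x \<in> X \<Longrightarrow> y \<in> X - E `` {x} \<Longrightarrow>
   z \<in> X - E `` {x} \<Longrightarrow> \<exists>!g. g \<in> U x \<and> g y = z"
  by (drule lm1) blast

lemma lm_fix: "local_moufang_set X E U \<Longrightarrow> x \<in> X \<Longrightarrow> g \<in> U x \<Longrightarrow> g x = x"
  by (drule lm1) blast

lemma ex1_eq: "\<exists>!x. P x \<Longrightarrow> P a \<Longrightarrow> P b \<Longrightarrow> a = b"
  by blast

lemma other_class:
  assumes L: "local_moufang_set X E U" and x: "x \<in> X"
  shows "\<exists>z\<in>X. (x, z) \<notin> E"
proof -
  have eq: "equiv X E" using lm_equiv[OF L] .
  obtain A B where A: "A \<in> X // E" and B: "B \<in> X // E" and AB: "A \<noteq> B"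
    using lm_three[OF L] by blast
  have "E `` {x} \<noteq> A \<or> E `` {x} \<noteq> B" using AB by blast
  then obtain C where C: "C \<in> X // E" "C \<noteq> E `` {x}" using A B by blast
  then obtain z where z: "z \<in> X" "C = E `` {z}" by (auto elim: quotientE)
  have "(x, z) \<notin> E"
  proof
    assume "(x, z) \<in> E"
    then have "E `` {x} = E `` {z}" using eq by (simp add: equiv_class_eq)
    with C z show False by simp
  qed
  with z show ?thesis by blast
qed

lemma sym_mem:
  assumes L: "local_moufang_set X E U" and x: "x \<in> X" and u: "u \<in> U x"
  shows "u \<in> sym_set X E"
proof -
  have "subgroup (U x) (sym_group X E)" using lm_sub[OF L] x by blast
  then have "U x \<subseteq> carrier (sym_group X E)" by (rule subgroup.subset)
  with u show ?thesis by (auto simp: sym_group_def)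
qed

lemma id_mem:
  assumes L: "local_moufang_set X E U" and x: "x \<in> X"
  shows "id \<in> U x"
proof -
  have "subgroup (U x) (sym_group X E)" using lm_sub[OF L] x by blast
  then have "\<one>\<^bsub>sym_group X E\<^esub> \<in> U x" by (rule subgroup.one_closed)
  then show ?thesis by (simp add: sym_group_def)
qed

lemma theta_char:
  assumes L1: "local_moufang_set X E U" and L2: "local_moufang_set Y F V"
    and H: "lms_hom X E U Y F V \<phi>" and x: "x \<in> X" and u: "u \<in> U x"
  shows "induced_theta X V \<phi> x u \<in> V (\<phi> x) \<and>
         (\<forall>z\<in>X. \<phi> (u z) = induced_theta X V \<phi> x u (\<phi> z))"
proof -
  obtain v where v: "v \<in> V (\<phi> x)" "\<forall>z\<in>X. \<phi> (u z) = v (\<phi> z)"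
    using H x u unfolding lms_hom_def by blast
  obtain z where z: "z \<in> X" "(x, z) \<notin> E" using other_class[OF L1 x] by blast
  have us: "u \<in> sym_set X E" using sym_mem[OF L1 x u] .
  have ux: "u x = x" using lm_fix[OF L1 x u] .
  have uzX: "u z \<in> X" using us z(1) unfolding sym_set_def by (auto intro: bij_betw_apply)
  have "(x, u z) \<notin> E" using us z x ux unfolding sym_set_def by force
  have phiY: "\<And>w. w \<in> X \<Longrightarrow> \<phi> w \<in> Y" using H unfolding lms_hom_def by blast
  have iff: "\<And>a b. a \<in> X \<Longrightarrow> b \<in> X \<Longrightarrow> (a, b) \<in> E \<longleftrightarrow> (\<phi> a, \<phi> b) \<in> F"
    using H unfolding lms_hom_def by blast
  have p1: "\<phi> z \<in> Y - F `` {\<phi> x}" using z x phiY iff by blast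
  have p2: "\<phi> (u z) \<in> Y - F `` {\<phi> x}" using \<open>(x, u z) \<notin> E\<close> uzX x phiY iff by blast
  have uniq: "\<exists>!g. g \<in> V (\<phi> x) \<and> g (\<phi> z) = \<phi> (u z)"
    using lm_trans[OF L2 phiY[OF x] p1 p2] .
  have "\<And>w. w \<in> V (\<phi> x) \<and> (\<forall>z\<in>X. \<phi> (u z) = w (\<phi> z)) \<Longrightarrow> w = v"
  proof -
    fix w assume w: "w \<in> V (\<phi> x) \<and> (\<forall>z\<in>X. \<phi> (u z) = w (\<phi> z))"
    have a: "w \<in> V (\<phi> x) \<and> w (\<phi> z) = \<phi> (u z)" using w z(1) by simp
    have b: "v \<in> V (\<phi> x) \<and> v (\<phi> z) = \<phi> (u z)" using v z(1) by simp
    show "w = v" using ex1_eq[OF uniq, OF a b] .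
  qed
  then have "induced_theta X V \<phi> x u = v"
    unfolding induced_theta_def using v by (intro the_equality) auto
  with v show ?thesis by simp
qed

lemma theta_id:
  assumes L1: "local_moufang_set X E U" and L2: "local_moufang_set Y F V"
    and H: "lms_hom X E U Y F V \<phi>" and x: "x \<in> X"
  shows "induced_theta X V \<phi> x id = id"
proof -
  obtain z where z: "z \<in> X" "(x, z) \<notin> E" using other_class[OF L1 x] by blast
  have phiY: "\<And>w. w \<in> X \<Longrightarrow> \<phi> w \<in> Y" using H unfolding lms_hom_def by blast
  have iff: "\<And>a b. a \<in> X \<Longrightarrow> b \<in> X \<Longrightarrow> (a, b) \<in> E \<longleftrightarrow> (\<phi> a, \<phi> b) \<in> F"
    using H unfolding lms_hom_def by blast
  have p1: "\<phi> z \<in> Y - F `` {\<phi> x}" using z x phiY iff by blast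
  have uniq: "\<exists>!g. g \<in> V (\<phi> x) \<and> g (\<phi> z) = \<phi> z"
    using lm_trans[OF L2 phiY[OF x] p1 p1] .
  have idV: "id \<in> V (\<phi> x)" using id_mem[OF L2 phiY[OF x]] .
  have c: "induced_theta X V \<phi> x id \<in> V (\<phi> x) \<and> (\<forall>w\<in>X. \<phi> w = induced_theta X V \<phi> x id (\<phi> w))"
    using theta_char[OF L1 L2 H x id_mem[OF L1 x]] by (simp add: id_def)
  have a: "induced_theta X V \<phi> x id \<in> V (\<phi> x) \<and> induced_theta X V \<phi> x id (\<phi> z) = \<phi> z"
    using c z(1) by simp
  have b: "id \<in> V (\<phi> x) \<and> id (\<phi> z) = \<phi> z" using idV by simp
  show ?thesis using ex1_eq[OF uniq, OF a b] .
qed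

lemma inj_to_theta:
  assumes L1: "local_moufang_set X E U" and L2: "local_moufang_set Y F V"
    and H: "lms_hom X E U Y F V \<phi>" and inj: "inj_on \<phi> X" and x: "x \<in> X"
  shows "inj_on (induced_theta X V \<phi> x) (U x)"
proof (rule inj_onI)
  fix u u' assume u: "u \<in> U x" and u': "u' \<in> U x"
    and eq: "induced_theta X V \<phi> x u = induced_theta X V \<phi> x u'"
  have us: "u \<in> sym_set X E" using sym_mem[OF L1 x u] .
  have us': "u' \<in> sym_set X E" using sym_mem[OF L1 x u'] .
  show "u = u'"
  proof
    fix z show "u z = u' z"
    proof (cases "z \<in> X")
      case True
      have t1: "\<phi> (u z) = induced_theta X V \<phi> x u (\<phi> z)"
        using theta_char[OF L1 L2 H x u] True by blast
      have t2: "\<phi> (u' z) = induced_theta X V \<phi> x u' (\<phi> z)"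
        using theta_char[OF L1 L2 H x u'] True by blast
      have e: "\<phi> (u z) = \<phi> (u' z)" using t1 t2 eq by simp
      have "bij_betw u X X" "bij_betw u' X X" using us us' unfolding sym_set_def by auto
      then have "u z \<in> X" "u' z \<in> X" using True by (auto intro: bij_betw_apply)
      then show ?thesis using inj e by (simp add: inj_on_def)
    next
      case False then show ?thesis using us us' unfolding sym_set_def by simp
    qed
  qed
qed

lemma theta_to_inj:
  assumes L1: "local_moufang_set X E U" and L2: "local_moufang_set Y F V"
    and H: "lms_hom X E U Y F V \<phi>" and x: "x \<in> X"
    and tinj: "inj_on (induced_theta X V \<phi> x) (U x)"
  shows "inj_on \<phi> X"
proof (rule inj_onI, rule ccontr)
  fix a b assume a: "a \<in> X" and b: "b \<in> X" and ab: "\<phi> a = \<phi> b" and ne: "a \<noteq> b"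
  have eqX: "equiv X E" using lm_equiv[OF L1] .
  have eqY: "equiv Y F" using lm_equiv[OF L2] .
  have phiY: "\<And>w. w \<in> X \<Longrightarrow> \<phi> w \<in> Y" using H unfolding lms_hom_def by blast
  have iff: "\<And>a b. a \<in> X \<Longrightarrow> b \<in> X \<Longrightarrow> (a, b) \<in> E \<longleftrightarrow> (\<phi> a, \<phi> b) \<in> F"
    using H unfolding lms_hom_def by blast
  have "\<exists>a' b'. a' \<in> X \<and> b' \<in> X \<and> \<phi> a' = \<phi> b' \<and> a' \<noteq> b' \<and> (x, a') \<notin> E"
  proof (cases "(x, a) \<in> E")
    case False then show ?thesis using a b ab ne by blast
  next
    case True
    obtain y where y: "y \<in> X" "(x, y) \<notin> E" using other_class[OF L1 x] by blast
    obtain A B C where ABC: "A \<in> X // E" "B \<in> X // E" "C \<in> X // E" "A \<noteq> B" "A \<noteq> C" "B \<noteq> C"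
      using lm_three[OF L1] by blast
    obtain D where D: "D \<in> X // E" "D \<noteq> E `` {x}" "D \<noteq> E `` {y}" using ABC by blast
    then obtain w where w: "w \<in> X" "D = E `` {w}" by (auto elim: quotientE)
    have wx: "(x, w) \<notin> E"
    proof assume "(x, w) \<in> E" then have "E `` {x} = E `` {w}" using eqX by (simp add: equiv_class_eq)
      with D w show False by simp qed
    have wy: "(y, w) \<notin> E"
    proof assume "(y, w) \<in> E" then have "E `` {y} = E `` {w}" using eqX by (simp add: equiv_class_eq)
      with D w show False by simp qed
    have yx: "(y, x) \<notin> E" using y eqX by (meson equivE symD)
    have "x \<in> X - E `` {y}" "w \<in> X - E `` {y}" using x w(1) yx wy by auto
    then obtain g where g: "g \<in> U y" "g x = w"
      using lm_trans[OF L1 y(1)] by blast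
    have gs: "g \<in> sym_set X E" using sym_mem[OF L1 y(1) g(1)] .
    have gbij: "bij_betw g X X" using gs unfolding sym_set_def by auto
    have gaX: "g a \<in> X" "g b \<in> X" using gbij a b by (auto intro: bij_betw_apply)
    have gne: "g a \<noteq> g b" using gbij a b ne unfolding bij_betw_def inj_on_def by blast
    obtain v where v: "\<forall>z\<in>X. \<phi> (g z) = v (\<phi> z)" using H y(1) g(1) unfolding lms_hom_def by blast
    have gab: "\<phi> (g a) = \<phi> (g b)" using v a b ab by simp
    have "(g x, g a) \<in> E" using gs x a True unfolding sym_set_def by blast
    then have "(w, g a) \<in> E" using g by simp
    then have "(x, g a) \<notin> E" using wx eqX unfolding equiv_def sym_def trans_def by blast
    then show ?thesis using gaX gne gab by blast
  qed
  then obtain a' b' where a': "a' \<in> X" and b': "b' \<in> X" and ab': "\<phi> a' = \<phi> b'"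
    and ne': "a' \<noteq> b'" and xa: "(x, a') \<notin> E" by blast
  have "(\<phi> a', \<phi> b') \<in> F" using ab' phiY[OF a'] eqY by (simp add: equiv_def refl_on_def)
  then have "(a', b') \<in> E" using iff a' b' by blast
  then have xb: "(x, b') \<notin> E" using xa eqX unfolding equiv_def sym_def trans_def by blast
  have "a' \<in> X - E `` {x}" "b' \<in> X - E `` {x}" using a' b' xa xb by auto
  then obtain u where u: "u \<in> U x" "u a' = b'"
    using lm_trans[OF L1 x] by blast
  have th: "induced_theta X V \<phi> x u \<in> V (\<phi> x)" "\<phi> (u a') = induced_theta X V \<phi> x u (\<phi> a')"
    using theta_char[OF L1 L2 H x u(1)] a' by auto
  have p1: "\<phi> a' \<in> Y - F `` {\<phi> x}" using xa x a' phiY iff by blast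
  have uniq: "\<exists>!g. g \<in> V (\<phi> x) \<and> g (\<phi> a') = \<phi> a'"
    using lm_trans[OF L2 phiY[OF x] p1 p1] .
  have idV: "id \<in> V (\<phi> x)" using id_mem[OF L2 phiY[OF x]] .
  have a: "induced_theta X V \<phi> x u \<in> V (\<phi> x) \<and> induced_theta X V \<phi> x u (\<phi> a') = \<phi> a'"
    using th u(2) ab' by simp
  have b: "id \<in> V (\<phi> x) \<and> id (\<phi> a') = \<phi> a'" using idV by simp
  have "induced_theta X V \<phi> x u = id" using ex1_eq[OF uniq, OF a b] .
  then have "induced_theta X V \<phi> x u = induced_theta X V \<phi> x id"
    using theta_id[OF L1 L2 H x] by simp
  then have "u = id" using tinj u(1) id_mem[OF L1 x] by (meson inj_onD)
  then show False using u(2) ne' by simp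
qed

theorem mainTheorem9:
  fixes X :: "'a set" and E :: "'a rel" and U :: "'a \<Rightarrow> ('a \<Rightarrow> 'a) set"
    and Y :: "'b set" and F :: "'b rel" and V :: "'b \<Rightarrow> ('b \<Rightarrow> 'b) set"
    and \<phi> :: "'a \<Rightarrow> 'b"
  assumes "local_moufang_set X E U"
    and "local_moufang_set Y F V"
    and "lms_hom X E U Y F V \<phi>"
  shows "(inj_on \<phi> X \<longleftrightarrow> (\<forall>x\<in>X. inj_on (induced_theta X V \<phi> x) (U x)))
       \<and> ((\<forall>x\<in>X. inj_on (induced_theta X V \<phi> x) (U x))
            \<longleftrightarrow> (\<exists>x\<in>X. inj_on (induced_theta X V \<phi> x) (U x)))"
proof -
  obtain A where "A \<in> X // E" using lm_three[OF assms(1)] by blast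
  then obtain x0 where x0: "x0 \<in> X" by (auto simp: quotient_def)
  have a: "inj_on \<phi> X \<Longrightarrow> \<forall>x\<in>X. inj_on (induced_theta X V \<phi> x) (U x)"
    using inj_to_theta[OF assms] by blast
  have b: "\<exists>x\<in>X. inj_on (induced_theta X V \<phi> x) (U x) \<Longrightarrow> inj_on \<phi> X"
    using theta_to_inj[OF assms] by blast
  have c: "\<forall>x\<in>X. inj_on (induced_theta X V \<phi> x) (U x) \<Longrightarrow> \<exists>x\<in>X. inj_on (induced_theta X V \<phi> x) (U x)"
    using x0 by blast
  show ?thesis using a b c by blast
qed

end
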